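(* Let $(\tau_\Sigma,\mathbb{B}_\Sigma)_\Sigma$ be a family indexed by finite sets $\Sigma$ with at least two elements, where $\tau_\Sigma$ is a topology on $T_\Sigma^\omega$ and $\mathbb{B}_\Sigma$ a basis of $\tau_\Sigma$, satisfying: (P1) $\mathbb{B}_\Sigma$ contains every basic clopen set $N_t$, $t$ a finite $\Sigma$-labelled binary tree; (P2) $\mathbb{B}_\Sigma$ is closed under finite unions and intersections; (P3) if $\Gamma$ is a finite set with at least two elements and $L\in\mathbb{B}_{\Sigma\times\Gamma}$ then $\pi_0[L]\in\mathbb{B}_\Sigma$; (P4) for each $L\in\mathbb{B}_\Sigma$ there is $C\in\mathbb{B}_{\Sigma\times 2}$ with $C\subseteq T_\Sigma^\omega\times\mathbb{T}_\infty$, $C$ the intersection of a closed subset of $T_\Sigma^\omega\times T_2^\omega$ with $T_\Sigma^\omega\times\mathbb{T}_\infty$, and $L=\pi_0[C]$. Then every $\tau_\Sigma$ is strong Choquet.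
   Context: $T_\Sigma^\omega$ is the set of functions $t:\{l,r\}^*\to\Sigma$ (infinite binary $\Sigma$-labelled trees) with the Cantor topology given by the distance $2^{-n}$, $n$ the least length of a node where two trees differ. A finite tree is a map $s:S\to\Sigma$ with $S\subseteq\{l,r\}^*$ finite and prefix-closed; $N_s$ is the set of $t\in T_\Sigma^\omega$ extending $s$. $T_{\Sigma\times\Gamma}^\omega$ is identified with $T_\Sigma^\omega\times T_\Gamma^\omega$ nodewise and $\pi_0$ is the first projection. A path of $t$ is the sequence of labels $t(u_0)t(u_1)\cdots$ along an infinite branch $u_0\sqsubset u_1\sqsubset\cdots$ with $u_0$ the root and each $u_{i+1}$ a child of $u_i$. $2=\{0,1\}$ and $\mathbb{T}_\infty$ is the set of $t\in T_2^\omega$ such that every path of $t$ contains infinitely many $1$'s. Strong Choquet: nonempty and Player 2 has a winning strategy in the strong Choquet game (Player 1 plays open $U_i\ni x_i$ with $U_i\subseteq V_{i-1}$, Player 2 plays open $V_i$ with $x_i\in V_i\subseteq U_i$, Player 2 wins if $\bigcap_iV_i\neq\emptyset$). *)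

theory Defs
  imports "HOL-Analysis.Analysis"
begin

(* Nodes of the binary tree are bool lists (False = l, True = r). *)

type_synonym tree = "bool list \<Rightarrow> nat"

definition trees :: "nat set \<Rightarrow> tree set" where
  "trees A = {t. \<forall>u. t u \<in> A}"

definition prod_alph :: "nat set \<Rightarrow> nat set \<Rightarrow> nat set" where
  "prod_alph A G = prod_encode ` (A \<times> G)"

definition pi0 :: "tree \<Rightarrow> tree" where
  "pi0 t = (\<lambda>u. fst (prod_decode (t u)))"

definition pi1 :: "tree \<Rightarrow> tree" where
  "pi1 t = (\<lambda>u. snd (prod_decode (t u)))"

definition two :: "nat set" where
  "two = {0, 1}"

(* basic clopen set N_s of a finite A-labelled tree s with (finite, prefix-closed) domain D *)
definition finite_tree :: "nat set \<Rightarrow> bool list set \<Rightarrow> tree \<Rightarrow> bool" where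
  "finite_tree A D s \<longleftrightarrow> finite D \<and> (\<forall>u v. u @ v \<in> D \<longrightarrow> u \<in> D) \<and> (\<forall>u\<in>D. s u \<in> A)"

definition basic_nbhd :: "nat set \<Rightarrow> bool list set \<Rightarrow> tree \<Rightarrow> tree set" where
  "basic_nbhd A D s = {t \<in> trees A. \<forall>u\<in>D. t u = s u}"

(* closed in the Cantor topology (metric 2^-n): contains all its limit points *)
definition cantor_closed :: "nat set \<Rightarrow> tree set \<Rightarrow> bool" where
  "cantor_closed A F \<longleftrightarrow> F \<subseteq> trees A \<and>
     (\<forall>t\<in>trees A. (\<forall>n. \<exists>f\<in>F. \<forall>u. length u < n \<longrightarrow> f u = t u) \<longrightarrow> t \<in> F)"

(* T_infinity: every path contains infinitely many 1's; a branch is given by its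
   direction sequence b, its n-th node being map b [0..<n] *)
definition T_inf :: "tree set" where
  "T_inf = {t \<in> trees two. \<forall>b :: nat \<Rightarrow> bool. infinite {n. t (map b [0..<n]) = 1}}"

(* T_A^omega x T_infinity inside T_{A x 2}^omega *)
definition times_T_inf :: "nat set \<Rightarrow> tree set" where
  "times_T_inf A = {t \<in> trees (prod_alph A two). pi1 t \<in> T_inf}"

definition is_basis_of :: "'a set set \<Rightarrow> 'a topology \<Rightarrow> bool" where
  "is_basis_of B X \<longleftrightarrow> (\<forall>U\<in>B. openin X U) \<and>
     (\<forall>U. openin X U \<longrightarrow> (\<exists>F\<subseteq>B. \<Union>F = U))"

(* strong Choquet game: player 2's strategy sigma sees the history (x_0,U_0),...,(x_n,U_n) *)
definition strong_choquet :: "'a topology \<Rightarrow> bool" where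
  "strong_choquet X \<longleftrightarrow> topspace X \<noteq> {} \<and>
    (\<exists>\<sigma> :: ('a \<times> 'a set) list \<Rightarrow> 'a set.
      \<forall>(x :: nat \<Rightarrow> 'a) (U :: nat \<Rightarrow> 'a set).
        let V = (\<lambda>n. \<sigma> (map (\<lambda>i. (x i, U i)) [0..<Suc n]));
            legal = (\<lambda>n. openin X (U n) \<and> x n \<in> U n \<and> (\<forall>m. n = Suc m \<longrightarrow> U n \<subseteq> V m))
        in (\<forall>n. (\<forall>i\<le>n. legal i) \<longrightarrow> openin X (V n) \<and> x n \<in> V n \<and> V n \<subseteq> U n) \<and>
           ((\<forall>n. legal n) \<longrightarrow> \<Inter>(range V) \<noteq> {}))"

end

theory Submission
  imports Defs
begin


definition cnt :: "tree \<Rightarrow> bool list \<Rightarrow> nat" where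
  "cnt y u = length (filter (\<lambda>i. pi1 y (take i u) = 1) [0..<length u])"

definition Ed :: "nat \<Rightarrow> tree \<Rightarrow> bool list set" where
  "Ed j z = {u. cnt z u < j}"

lemma cnt_nil[simp]: "cnt y [] = 0" by (simp add: cnt_def)

lemma cnt_snoc: "cnt y (u@[a]) = cnt y u + (if pi1 y u = 1 then 1 else 0)"
proof -
  have "filter (\<lambda>i. pi1 y (take i (u@[a])) = 1) [0..<length u] =
        filter (\<lambda>i. pi1 y (take i u) = 1) [0..<length u]"
    by (rule filter_cong) auto
  then show ?thesis by (simp add: cnt_def)
qed

lemma cnt_mono: "cnt y u \<le> cnt y (u @ v)"
proof (induction v rule: rev_induct)
  case Nil then show ?case by simp
next
  case (snoc a v) then show ?case using cnt_snoc[of y "u@v" a] by simp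
qed

lemma cnt_le_length: "cnt y u \<le> length u"
  by (simp add: cnt_def) (metis diff_zero length_filter_le length_upt)

lemma Ed_prefix: "u @ v \<in> Ed j z \<Longrightarrow> u \<in> Ed j z"
  using cnt_mono[of z u v] by (auto simp: Ed_def)

lemma Ed_len: "length u < j \<Longrightarrow> u \<in> Ed j z"
  using cnt_le_length[of z u] by (auto simp: Ed_def)

lemma Ed_mono: "j \<le> j' \<Longrightarrow> Ed j z \<subseteq> Ed j' z"
  by (auto simp: Ed_def)

lemma Ed_det:
  assumes agree: "\<And>u. u \<in> Ed j z \<Longrightarrow> z' u = z u"
  shows "(u \<in> Ed j z' \<longleftrightarrow> u \<in> Ed j z) \<and> (u \<in> Ed j z \<longrightarrow> cnt z' u = cnt z u)"
proof (induction u rule: rev_induct)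
  case Nil then show ?case by (simp add: Ed_def)
next
  case (snoc a u)
  show ?case
  proof (cases "u \<in> Ed j z")
    case True
    then have "pi1 z' u = pi1 z u" using agree by (simp add: pi1_def)
    then show ?thesis using snoc True by (simp add: Ed_def cnt_snoc)
  next
    case False
    then have "u \<notin> Ed j z'" using snoc by simp
    then show ?thesis using False Ed_prefix by blast
  qed
qed

lemma Ed_det': "(\<And>u. u \<in> Ed j z \<Longrightarrow> z' u = z u) \<Longrightarrow> Ed j z' = Ed j z"
  using Ed_det by blast

lemma cnt_branch: "cnt y (map b [0..<N]) = card {i. i < N \<and> pi1 y (map b [0..<i]) = 1}"
proof (induction N)
  case 0 then show ?case by simp
next
  case (Suc N)
  have e: "{i. i < Suc N \<and> pi1 y (map b [0..<i]) = 1} =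
     {i. i < N \<and> pi1 y (map b [0..<i]) = 1} \<union> (if pi1 y (map b [0..<N]) = 1 then {N} else {})"
    by (auto simp: less_Suc_eq)
  show ?case
  proof (cases "pi1 y (map b [0..<N]) = 1")
    case True
    then have "{i. i < Suc N \<and> pi1 y (map b [0..<i]) = 1} = insert N {i. i < N \<and> pi1 y (map b [0..<i]) = 1}"
      using e by auto
    then show ?thesis using Suc True by (simp add: cnt_snoc)
  next
    case False
    then have "{i. i < Suc N \<and> pi1 y (map b [0..<i]) = 1} = {i. i < N \<and> pi1 y (map b [0..<i]) = 1}"
      using e by auto
    then show ?thesis using Suc False by (simp add: cnt_snoc)
  qed
qed

lemma koenig:
  fixes S :: "bool list set"
  assumes inf: "infinite S" and pc: "\<And>u v. u @ v \<in> S \<Longrightarrow> u \<in> S"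
  shows "\<exists>b. \<forall>n. map b [0..<n] \<in> S"
proof -
  define good where "good u \<longleftrightarrow> infinite {v. u @ v \<in> S}" for u
  have g0: "good []" using inf by (simp add: good_def)
  have gstep: "good (u @ [good (u @ [True])])" if "good u" for u
  proof (rule ccontr)
    assume ng: "\<not> good (u @ [good (u @ [True])])"
    have "\<not> good (u @ [True])" using ng by (cases "good (u @ [True])") auto
    moreover have "\<not> good (u @ [False])" using ng calculation by simp
    ultimately have f1: "finite {w. (u@[True]) @ w \<in> S}" and f2: "finite {w. (u@[False]) @ w \<in> S}"
      by (auto simp: good_def)
    have "{v. u @ v \<in> S} \<subseteq> insert [] ((\<lambda>w. True # w) ` {w. (u@[True]) @ w \<in> S} \<union> (\<lambda>w. False # w) ` {w. (u@[False]) @ w \<in> S})"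
    proof
      fix v assume "v \<in> {v. u @ v \<in> S}"
      then have vS: "u @ v \<in> S" by simp
      show "v \<in> insert [] ((\<lambda>w. True # w) ` {w. (u@[True]) @ w \<in> S} \<union> (\<lambda>w. False # w) ` {w. (u@[False]) @ w \<in> S})"
      proof (cases v)
        case Nil then show ?thesis by simp
      next
        case (Cons c w)
        then have "w \<in> {w. (u@[c]) @ w \<in> S}" using vS by simp
        then show ?thesis using Cons by (cases c) auto
      qed
    qed
    then have "finite {v. u @ v \<in> S}" using f1 f2 by (meson finite_Un finite_imageI finite_insert finite_subset)
    then show False using that by (simp add: good_def)
  qed
  define p where "p = rec_nat [] (\<lambda>n l. l @ [good (l @ [True])])"
  have p0: "p 0 = []" and pS: "p (Suc n) = p n @ [good (p n @ [True])]" for n by (simp_all add: p_def)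
  have gp: "good (p n)" for n by (induction n) (simp_all add: g0 p0 pS gstep)
  define b where "b n = good (p n @ [True])" for n
  have mp: "map b [0..<n] = p n" for n by (induction n) (simp_all add: p0 pS b_def)
  have "p n \<in> S" for n
  proof -
    from gp[of n] have "{v. p n @ v \<in> S} \<noteq> {}" unfolding good_def by (metis finite.emptyI)
    then obtain v where "p n @ v \<in> S" by auto
    then show ?thesis using pc by blast
  qed
  then show ?thesis using mp by metis
qed

lemma Ed_finite:
  assumes "pi1 z \<in> T_inf" shows "finite (Ed j z)"
proof (rule ccontr)
  assume "infinite (Ed j z)"
  then obtain b where b: "\<forall>n. map b [0..<n] \<in> Ed j z" using koenig Ed_prefix by metis
  have "infinite {n. pi1 z (map b [0..<n]) = 1}" using assms by (simp add: T_inf_def)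
  then obtain F where F: "F \<subseteq> {n. pi1 z (map b [0..<n]) = 1}" "finite F" "card F = j"
    using infinite_arbitrarily_large by blast
  obtain N where N: "F \<subseteq> {..<N}" using finite_nat_bounded F(2) by blast
  have FN: "F \<subseteq> {i. i < N \<and> pi1 z (map b [0..<i]) = 1}"
    using F(1) N by auto
  then have "j \<le> card {i. i < N \<and> pi1 z (map b [0..<i]) = 1}"
  proof -
    have "finite {i. i < N \<and> pi1 z (map b [0..<i]) = 1}" by simp
    then show ?thesis using card_mono[OF _ FN] F(3) by simp
  qed
  then have "j \<le> cnt z (map b [0..<N])" by (simp add: cnt_branch)
  moreover have "cnt z (map b [0..<N]) < j" using b by (simp add: Ed_def)
  ultimately show False by simp
qed



locale SC =
  fixes \<tau> :: "nat set \<Rightarrow> tree topology"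
    and B :: "nat set \<Rightarrow> tree set set"
    and A :: "nat set"
  assumes top: "\<And>A. finite A \<Longrightarrow> 2 \<le> card A \<Longrightarrow> topspace (\<tau> A) = trees A"
    and basis: "\<And>A. finite A \<Longrightarrow> 2 \<le> card A \<Longrightarrow> is_basis_of (B A) (\<tau> A)"
    and P1: "\<And>A D s. finite A \<Longrightarrow> 2 \<le> card A \<Longrightarrow> finite_tree A D s \<Longrightarrow>
               basic_nbhd A D s \<in> B A"
    and P2: "\<And>A L M. finite A \<Longrightarrow> 2 \<le> card A \<Longrightarrow> L \<in> B A \<Longrightarrow> M \<in> B A \<Longrightarrow>
               L \<union> M \<in> B A \<and> L \<inter> M \<in> B A"
    and P3: "\<And>A G L. finite A \<Longrightarrow> 2 \<le> card A \<Longrightarrow> finite G \<Longrightarrow> 2 \<le> card G \<Longrightarrow>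
               L \<in> B (prod_alph A G) \<Longrightarrow> pi0 ` L \<in> B A"
    and P4: "\<And>A L. finite A \<Longrightarrow> 2 \<le> card A \<Longrightarrow> L \<in> B A \<Longrightarrow>
               \<exists>C \<in> B (prod_alph A two). C \<subseteq> times_T_inf A \<and>
                 (\<exists>F. cantor_closed (prod_alph A two) F \<and> C = F \<inter> times_T_inf A) \<and>
                 L = pi0 ` C"
    and finA: "finite A" and cardA: "2 \<le> card A"
begin

abbreviation "A2 \<equiv> prod_alph A two"

lemma card_two: "card two = 2" by (simp add: two_def)
lemma fin_two: "finite two" by (simp add: two_def)

lemma A2_fin: "finite A2" using finA by (simp add: prod_alph_def two_def)

lemma A2_card: "2 \<le> card A2"
proof -
  have "card A2 = card (A \<times> two)"
    unfolding prod_alph_def by (rule card_image) (simp add: inj_on_def)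
  also have "\<dots> = card A * 2" by (simp add: card_cartesian_product card_two)
  finally show ?thesis using cardA by simp
qed

lemma trees_split: "z \<in> trees A2 \<Longrightarrow> pi0 z \<in> trees A \<and> pi1 z \<in> trees two"
proof -
  assume z: "z \<in> trees A2"
  have "fst (prod_decode (z u)) \<in> A \<and> snd (prod_decode (z u)) \<in> two" for u
  proof -
    from z have "z u \<in> prod_encode ` (A \<times> two)" by (simp add: trees_def prod_alph_def)
    then obtain p where "p \<in> A \<times> two" "z u = prod_encode p" by blast
    then show ?thesis by (cases p) simp
  qed
  then show ?thesis by (simp add: trees_def pi0_def pi1_def)
qed

definition Lof :: "tree \<Rightarrow> tree set \<Rightarrow> tree set" where
  "Lof t S = (SOME L. L \<in> B A \<and> t \<in> L \<and> L \<subseteq> S)"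

definition Cof :: "tree set \<Rightarrow> tree set" where
  "Cof L = (SOME C. C \<in> B A2 \<and> C \<subseteq> times_T_inf A \<and>
                 (\<exists>F. cantor_closed A2 F \<and> C = F \<inter> times_T_inf A) \<and> L = pi0 ` C)"

definition CC :: "tree \<Rightarrow> tree set \<Rightarrow> tree set" where
  "CC t S = Cof (Lof t S)"

lemma CC_props:
  assumes "openin (\<tau> A) S" "t \<in> S"
  shows "CC t S \<in> B A2 \<and> CC t S \<subseteq> times_T_inf A \<and>
     (\<exists>F. cantor_closed A2 F \<and> CC t S = F \<inter> times_T_inf A) \<and> pi0 ` CC t S \<subseteq> S \<and> t \<in> pi0 ` CC t S"
proof -
  have bas: "\<forall>U. openin (\<tau> A) U \<longrightarrow> (\<exists>F\<subseteq>B A. \<Union>F = U)"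
    using basis[OF finA cardA] unfolding is_basis_of_def by (rule conjunct2)
  obtain F where F: "F \<subseteq> B A" "\<Union>F = S" using bas assms(1) by blast
  then obtain L where "L \<in> F" "t \<in> L" using assms(2) by blast
  then have "L \<in> B A \<and> t \<in> L \<and> L \<subseteq> S" using F by blast
  then have "\<exists>L. L \<in> B A \<and> t \<in> L \<and> L \<subseteq> S" by (rule exI)
  then have L: "Lof t S \<in> B A \<and> t \<in> Lof t S \<and> Lof t S \<subseteq> S"
    unfolding Lof_def by (rule someI_ex)
  have "\<exists>C \<in> B A2. C \<subseteq> times_T_inf A \<and>
                 (\<exists>F. cantor_closed A2 F \<and> C = F \<inter> times_T_inf A) \<and> Lof t S = pi0 ` C"
    using P4[OF finA cardA conjunct1[OF L]] .
  then have "\<exists>C. C \<in> B A2 \<and> C \<subseteq> times_T_inf A \<and>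
                 (\<exists>F. cantor_closed A2 F \<and> C = F \<inter> times_T_inf A) \<and> Lof t S = pi0 ` C"
    by (simp only: Bex_def)
  then have C: "CC t S \<in> B A2 \<and> CC t S \<subseteq> times_T_inf A \<and>
                 (\<exists>F. cantor_closed A2 F \<and> CC t S = F \<inter> times_T_inf A) \<and> Lof t S = pi0 ` CC t S"
    unfolding CC_def Cof_def by (rule someI_ex)
  then have "pi0 ` CC t S \<subseteq> S" "t \<in> pi0 ` CC t S" using L by simp_all
  then show ?thesis using C by blast
qed

definition Nb :: "tree \<Rightarrow> nat \<Rightarrow> tree set" where
  "Nb z j = basic_nbhd A2 (Ed j z) z"

fun W :: "(nat \<Rightarrow> tree) \<Rightarrow> (nat \<Rightarrow> tree set) \<Rightarrow> nat \<Rightarrow> nat \<Rightarrow> tree" where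
  "W x U 0 k = (SOME z. z \<in> CC (x 0) (U 0) \<and> pi0 z = x 0)"
| "W x U (Suc n) k = (if k \<le> n then (SOME z. z \<in> CC (x k) (U k) \<inter> Nb (W x U n k) (Suc n) \<and> pi0 z = x (Suc n))
      else (SOME z. z \<in> CC (x (Suc n)) (U (Suc n)) \<and> pi0 z = x (Suc n)))"

declare W.simps[simp del]

lemma W_diag: "W x U n n = (SOME z. z \<in> CC (x n) (U n) \<and> pi0 z = x n)"
  by (cases n) (simp_all add: W.simps)

lemma W_Suc_eq: "k \<le> n \<Longrightarrow> W x U (Suc n) k =
   (SOME z. z \<in> CC (x k) (U k) \<inter> Nb (W x U n k) (Suc n) \<and> pi0 z = x (Suc n))"
  by (simp add: W.simps)

definition Vs :: "(nat \<Rightarrow> tree) \<Rightarrow> (nat \<Rightarrow> tree set) \<Rightarrow> nat \<Rightarrow> tree set" where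
  "Vs x U n = (\<Inter>k\<in>{..n}. pi0 ` (CC (x k) (U k) \<inter> Nb (W x U n k) (Suc n)))"

definition legal where
  "legal x U n \<longleftrightarrow> openin (\<tau> A) (U n) \<and> x n \<in> U n \<and> (\<forall>m. n = Suc m \<longrightarrow> U n \<subseteq> Vs x U m)"

lemma W_local: "(\<forall>i\<le>n. x i = x' i \<and> U i = U' i) \<Longrightarrow> W x U n k = W x' U' n k"
proof (induction n arbitrary: k)
  case 0 then show ?case by (simp add: W.simps)
next
  case (Suc n)
  have h: "\<forall>i\<le>n. x i = x' i \<and> U i = U' i" using Suc.prems by simp
  have "W x U n k = W x' U' n k" by (rule Suc.IH[OF h])
  moreover have "x (Suc n) = x' (Suc n)" "U (Suc n) = U' (Suc n)" using Suc.prems by auto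
  moreover have "k \<le> n \<Longrightarrow> x k = x' k \<and> U k = U' k" using Suc.prems by auto
  ultimately show ?case by (simp add: W.simps)
qed

lemma Vs_local: "(\<forall>i\<le>n. x i = x' i \<and> U i = U' i) \<Longrightarrow> Vs x U n = Vs x' U' n"
proof -
  assume h: "\<forall>i\<le>n. x i = x' i \<and> U i = U' i"
  have "\<And>k. W x U n k = W x' U' n k" using W_local[OF h] .
  then show ?thesis unfolding Vs_def using h by (intro INF_cong refl) auto
qed

lemma W_new:
  assumes "legal x U n" "k = n"
  shows "W x U n k \<in> CC (x k) (U k) \<and> pi0 (W x U n k) = x n"
proof -
  have "\<exists>z. z \<in> CC (x n) (U n) \<and> pi0 z = x n"
    using CC_props[of "U n" "x n"] assms by (auto simp: legal_def)
  then have "(SOME z. z \<in> CC (x n) (U n) \<and> pi0 z = x n) \<in> CC (x n) (U n) \<and> pi0 (SOME z. z \<in> CC (x n) (U n) \<and> pi0 z = x n) = x n"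
    by (rule someI_ex)
  then show ?thesis using assms by (simp add: W_diag)
qed

lemma W_Suc:
  assumes "legal x U (Suc n)" "k \<le> n"
  shows "W x U (Suc n) k \<in> CC (x k) (U k) \<inter> Nb (W x U n k) (Suc n) \<and> pi0 (W x U (Suc n) k) = x (Suc n)"
proof -
  have "x (Suc n) \<in> Vs x U n" using assms(1) by (auto simp: legal_def)
  then have "x (Suc n) \<in> pi0 ` (CC (x k) (U k) \<inter> Nb (W x U n k) (Suc n))"
    using assms(2) by (auto simp: Vs_def)
  then have "\<exists>z. z \<in> CC (x k) (U k) \<inter> Nb (W x U n k) (Suc n) \<and> pi0 z = x (Suc n)" by auto
  then have "(SOME z. z \<in> CC (x k) (U k) \<inter> Nb (W x U n k) (Suc n) \<and> pi0 z = x (Suc n)) \<in> CC (x k) (U k) \<inter> Nb (W x U n k) (Suc n)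
     \<and> pi0 (SOME z. z \<in> CC (x k) (U k) \<inter> Nb (W x U n k) (Suc n) \<and> pi0 z = x (Suc n)) = x (Suc n)"
    by (rule someI_ex)
  then show ?thesis using assms(2) by (simp only: W_Suc_eq)
qed

lemma W_props:
  "(\<forall>i\<le>n. legal x U i) \<Longrightarrow> k \<le> n \<Longrightarrow> W x U n k \<in> CC (x k) (U k) \<and> pi0 (W x U n k) = x n"
proof (induction n arbitrary: k)
  case 0
  then have "k = 0" "legal x U 0" by auto
  then show ?case using W_new[of x U 0 k] by blast
next
  case (Suc n)
  show ?case
  proof (cases "k \<le> n")
    case True
    have "legal x U (Suc n)" using Suc.prems by blast
    then show ?thesis using W_Suc[of x U n k] True by blast
  next
    case False
    then have "k = Suc n" using Suc.prems by simp
    moreover have "legal x U (Suc n)" using Suc.prems by blast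
    ultimately show ?thesis using W_new[of x U "Suc n" k] by blast
  qed
qed

lemma W_tinf:
  assumes "\<forall>i\<le>n. legal x U i" "k \<le> n"
  shows "W x U n k \<in> trees A2 \<and> pi1 (W x U n k) \<in> T_inf"
proof -
  have "legal x U k" using assms by simp
  then have "openin (\<tau> A) (U k)" "x k \<in> U k" unfolding legal_def by blast+
  then have "CC (x k) (U k) \<subseteq> times_T_inf A" using CC_props by blast
  then have "W x U n k \<in> times_T_inf A" using W_props[OF assms] by blast
  then show ?thesis unfolding times_T_inf_def by blast
qed

end


context SC begin

lemma agree_step:
  assumes "\<forall>i\<le>Suc n. legal x U i" "k \<le> n"
  shows "(\<forall>u\<in>Ed (Suc n) (W x U n k). W x U (Suc n) k u = W x U n k u) \<and>
         Ed (Suc n) (W x U (Suc n) k) = Ed (Suc n) (W x U n k)"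
proof -
  have "legal x U (Suc n)" using assms by simp
  then have "W x U (Suc n) k \<in> Nb (W x U n k) (Suc n)" using W_Suc[of x U n k] assms(2) by blast
  then have ag: "\<forall>u\<in>Ed (Suc n) (W x U n k). W x U (Suc n) k u = W x U n k u"
    by (simp add: Nb_def basic_nbhd_def)
  then show ?thesis using Ed_det'[of "Suc n" "W x U n k" "W x U (Suc n) k"] by blast
qed

lemma stab:
  assumes L: "\<forall>i. legal x U i" and "k \<le> n" "n \<le> m"
  shows "(\<forall>u\<in>Ed (Suc n) (W x U n k). W x U m k u = W x U n k u) \<and>
         Ed (Suc n) (W x U m k) = Ed (Suc n) (W x U n k)"
  using assms(3)
proof (induction m rule: dec_induct)
  case base then show ?case by simp
next
  case (step m)
  have km: "k \<le> m" using step.hyps assms(2) by simp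
  have st: "(\<forall>u\<in>Ed (Suc m) (W x U m k). W x U (Suc m) k u = W x U m k u) \<and>
         Ed (Suc m) (W x U (Suc m) k) = Ed (Suc m) (W x U m k)"
    using agree_step[of "m" x U k] L km by simp
  have sub: "Ed (Suc n) (W x U m k) \<subseteq> Ed (Suc m) (W x U m k)"
    using Ed_mono step.hyps by simp
  have ag1: "\<forall>u\<in>Ed (Suc n) (W x U n k). W x U (Suc m) k u = W x U n k u"
    using step.IH st sub by auto
  have "\<forall>u\<in>Ed (Suc n) (W x U m k). W x U (Suc m) k u = W x U m k u"
    using st sub by auto
  then have "Ed (Suc n) (W x U (Suc m) k) = Ed (Suc n) (W x U m k)"
    using Ed_det'[of "Suc n" "W x U m k" "W x U (Suc m) k"] by blast
  then show ?case using ag1 step.IH by simp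
qed

definition zlim :: "(nat \<Rightarrow> tree) \<Rightarrow> (nat \<Rightarrow> tree set) \<Rightarrow> nat \<Rightarrow> tree" where
  "zlim x U k = (\<lambda>u. W x U (max k (length u)) k u)"

lemma zl:
  assumes L: "\<forall>i. legal x U i" and "k \<le> m" "length u \<le> m"
  shows "W x U m k u = zlim x U k u"
proof -
  define p where "p = max k (length u)"
  have "u \<in> Ed (Suc p) (W x U p k)" using Ed_len p_def by simp
  moreover have "k \<le> p" "p \<le> m" using assms p_def by auto
  ultimately have "W x U m k u = W x U p k u" using stab[OF L, of k p m] by blast
  then show ?thesis by (simp add: zlim_def p_def)
qed

lemma zlim_agree:
  assumes L: "\<forall>i. legal x U i" and "k \<le> n" "u \<in> Ed (Suc n) (W x U n k)"
  shows "zlim x U k u = W x U n k u"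
proof -
  define m where "m = max n (length u)"
  have "W x U m k u = zlim x U k u" using zl[OF L] assms m_def by simp
  moreover have "W x U m k u = W x U n k u" using stab[OF L, of k n m] assms m_def by simp
  ultimately show ?thesis by simp
qed

lemma zlim_Ed:
  assumes L: "\<forall>i. legal x U i" and "k \<le> n"
  shows "Ed (Suc n) (zlim x U k) = Ed (Suc n) (W x U n k)"
  using Ed_det'[of "Suc n" "W x U n k" "zlim x U k"] zlim_agree[OF L assms(2)] by blast

lemma Lall: "\<forall>i. legal x U i \<Longrightarrow> \<forall>i\<le>n. legal x U i" by simp

lemma zlim_trees:
  assumes L: "\<forall>i. legal x U i"
  shows "zlim x U k \<in> trees A2"
proof -
  have "zlim x U k u \<in> A2" for u
  proof -
    have "W x U (max k (length u)) k \<in> trees A2" using W_tinf[OF Lall[OF L]] by simp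
    then show ?thesis by (simp add: zlim_def trees_def)
  qed
  then show ?thesis by (simp add: trees_def)
qed

lemma zlim_Tinf:
  assumes L: "\<forall>i. legal x U i"
  shows "pi1 (zlim x U k) \<in> T_inf"
proof -
  have "pi1 (zlim x U k) \<in> trees two" using trees_split zlim_trees[OF L] by blast
  moreover have "infinite {i. pi1 (zlim x U k) (map b [0..<i]) = 1}" for b
  proof
    assume fin: "finite {i. pi1 (zlim x U k) (map b [0..<i]) = 1}"
    define c where "c = card {i. pi1 (zlim x U k) (map b [0..<i]) = 1}"
    define n where "n = max k c"
    have kn: "k \<le> n" by (simp add: n_def)
    have "finite (Ed (Suc n) (W x U n k))" using W_tinf[OF Lall[OF L] kn] Ed_finite by blast
    then have fE: "finite (Ed (Suc n) (zlim x U k))" using zlim_Ed[OF L kn] by simp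
    have "\<exists>N. map b [0..<N] \<notin> Ed (Suc n) (zlim x U k)"
    proof (rule ccontr)
      assume "\<not> ?thesis"
      then have "range (\<lambda>N. map b [0..<N]) \<subseteq> Ed (Suc n) (zlim x U k)" by auto
      moreover have "inj (\<lambda>N. map b [0..<N])"
        by (rule injI) (metis diff_zero length_map length_upt)
      ultimately have "finite (UNIV :: nat set)"
        using fE finite_subset finite_imageD by metis
      then show False by simp
    qed
    then obtain N where N: "map b [0..<N] \<notin> Ed (Suc n) (zlim x U k)" by blast
    then have "Suc n \<le> card {i. i < N \<and> pi1 (zlim x U k) (map b [0..<i]) = 1}"
      by (simp add: Ed_def cnt_branch)
    moreover have "card {i. i < N \<and> pi1 (zlim x U k) (map b [0..<i]) = 1} \<le> c"
      unfolding c_def by (rule card_mono[OF fin]) blast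
    ultimately show False by (simp add: n_def)
  qed
  ultimately show ?thesis by (simp add: T_inf_def)
qed

end


context SC begin

lemma zlim_CC:
  assumes L: "\<forall>i. legal x U i"
  shows "zlim x U k \<in> CC (x k) (U k)"
proof -
  have lk: "legal x U k" using L by simp
  then obtain F where F: "cantor_closed A2 F" "CC (x k) (U k) = F \<inter> times_T_inf A"
    using CC_props[of "U k" "x k"] by (auto simp: legal_def)
  have zt: "zlim x U k \<in> trees A2" by (rule zlim_trees[OF L])
  have "zlim x U k \<in> times_T_inf A"
    using zt zlim_Tinf[OF L] by (simp add: times_T_inf_def)
  moreover have "zlim x U k \<in> F"
  proof -
    have "\<exists>f\<in>F. \<forall>u. length u < n \<longrightarrow> f u = zlim x U k u" for n
    proof -
      define m where "m = max k n"
      have "W x U m k \<in> CC (x k) (U k)" using W_props[OF Lall[OF L]] m_def by simp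
      then have "W x U m k \<in> F" using F(2) by blast
      moreover have "\<forall>u::bool list. length u < n \<longrightarrow> W x U m k u = zlim x U k u"
        using zl[OF L] m_def by simp
      ultimately show ?thesis by blast
    qed
    then show ?thesis using F(1) zt unfolding cantor_closed_def by blast
  qed
  ultimately show ?thesis using F(2) by blast
qed

lemma zlim_pi0:
  assumes L: "\<forall>i. legal x U i"
  shows "pi0 (zlim x U k) = pi0 (zlim x U 0)"
proof
  fix u :: "bool list"
  define m where "m = max k (length u)"
  have a: "W x U m k u = zlim x U k u" "W x U m 0 u = zlim x U 0 u" using zl[OF L] m_def by simp_all
  have "pi0 (W x U m k) = x m" "pi0 (W x U m 0) = x m" using W_props[OF Lall[OF L]] m_def by simp_all
  then have "pi0 (W x U m k) u = pi0 (W x U m 0) u" by simp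
  then show "pi0 (zlim x U k) u = pi0 (zlim x U 0) u" using a by (simp add: pi0_def)
qed

lemma in_all_Vs:
  assumes L: "\<forall>i. legal x U i"
  shows "pi0 (zlim x U 0) \<in> Vs x U n"
  unfolding Vs_def
proof
  fix k assume "k \<in> {..n}"
  then have kn: "k \<le> n" by simp
  have "zlim x U k \<in> Nb (W x U n k) (Suc n)"
    using zlim_trees[OF L] zlim_agree[OF L kn] by (simp add: Nb_def basic_nbhd_def)
  then have "zlim x U k \<in> CC (x k) (U k) \<inter> Nb (W x U n k) (Suc n)" using zlim_CC[OF L] by blast
  then show "pi0 (zlim x U 0) \<in> pi0 ` (CC (x k) (U k) \<inter> Nb (W x U n k) (Suc n))"
    using zlim_pi0[OF L, of k] by (metis image_eqI)
qed

lemma INT_B: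
  fixes f :: "nat \<Rightarrow> tree set" and n :: nat
  shows "(\<forall>k\<le>n. f k \<in> B A) \<Longrightarrow> (\<Inter>k\<in>{..n}. f k) \<in> B A"
proof (induction n)
  case 0 then show ?case by simp
next
  case (Suc n)
  have e: "(\<Inter>k\<in>{..Suc n}. f k) = f (Suc n) \<inter> (\<Inter>k\<in>{..n}. f k)"
    by (simp add: atMost_Suc)
  have "(\<Inter>k\<in>{..n}. f k) \<in> B A" using Suc by simp
  moreover have "f (Suc n) \<in> B A" using Suc.prems by simp
  ultimately show ?case unfolding e using P2[OF finA cardA] by blast
qed

lemma Vs_B:
  assumes "\<forall>i\<le>n. legal x U i"
  shows "Vs x U n \<in> B A"
  unfolding Vs_def
proof (rule INT_B, intro allI impI)
  fix k assume kn: "k \<le> n"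
  have lk: "legal x U k" using assms kn by simp
  then have C: "CC (x k) (U k) \<in> B A2" using CC_props[of "U k" "x k"] by (auto simp: legal_def)
  have wt: "W x U n k \<in> trees A2 \<and> pi1 (W x U n k) \<in> T_inf" using W_tinf[OF assms kn] .
  have "finite_tree A2 (Ed (Suc n) (W x U n k)) (W x U n k)"
    unfolding finite_tree_def using wt Ed_finite Ed_prefix by (auto simp: trees_def)
  then have "Nb (W x U n k) (Suc n) \<in> B A2"
    unfolding Nb_def by (rule P1[OF A2_fin A2_card])
  then have "CC (x k) (U k) \<inter> Nb (W x U n k) (Suc n) \<in> B A2"
    using P2[OF A2_fin A2_card C] by blast
  then show "pi0 ` (CC (x k) (U k) \<inter> Nb (W x U n k) (Suc n)) \<in> B A"
    using P3[OF finA cardA fin_two] card_two by simp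
qed

lemma Vs_good:
  assumes "\<forall>i\<le>n. legal x U i"
  shows "openin (\<tau> A) (Vs x U n) \<and> x n \<in> Vs x U n \<and> Vs x U n \<subseteq> U n"
proof (intro conjI)
  show "openin (\<tau> A) (Vs x U n)"
    using Vs_B[OF assms] basis[OF finA cardA] unfolding is_basis_of_def by blast
  show "x n \<in> Vs x U n"
    unfolding Vs_def
  proof
    fix k assume "k \<in> {..n}"
    then have kn: "k \<le> n" by simp
    have wp: "W x U n k \<in> CC (x k) (U k) \<and> pi0 (W x U n k) = x n" using W_props[OF assms kn] .
    have "W x U n k \<in> Nb (W x U n k) (Suc n)"
      using W_tinf[OF assms kn] by (simp add: Nb_def basic_nbhd_def)
    then show "x n \<in> pi0 ` (CC (x k) (U k) \<inter> Nb (W x U n k) (Suc n))"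
      using wp by (metis IntI image_eqI)
  qed
  have ln: "legal x U n" using assms by simp
  then have "pi0 ` CC (x n) (U n) \<subseteq> U n" using CC_props[of "U n" "x n"] by (auto simp: legal_def)
  moreover have "Vs x U n \<subseteq> pi0 ` CC (x n) (U n)" unfolding Vs_def by blast
  ultimately show "Vs x U n \<subseteq> U n" by blast
qed

lemma sc: "strong_choquet (\<tau> A)"
proof -
  obtain a where "a \<in> A" using cardA by (metis card.empty ex_in_conv not_numeral_le_zero)
  then have "(\<lambda>_. a) \<in> trees A" by (simp add: trees_def)
  then have ne: "topspace (\<tau> A) \<noteq> {}" using top[OF finA cardA] by auto
  define \<sigma> where "\<sigma> h = Vs (\<lambda>i. fst (h ! i)) (\<lambda>i. snd (h ! i)) (length h - 1)" for h :: "(tree \<times> tree set) list"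
  have eqV: "\<sigma> (map (\<lambda>i. (x i, U i)) [0..<Suc n]) = Vs x U n" for x U n
  proof -
    have "Vs (\<lambda>i. fst (map (\<lambda>i. (x i, U i)) [0..<Suc n] ! i)) (\<lambda>i. snd (map (\<lambda>i. (x i, U i)) [0..<Suc n] ! i)) n = Vs x U n"
      by (rule Vs_local) (simp del: upt_Suc add: nth_map_upt)
    then show ?thesis by (simp add: \<sigma>_def del: upt_Suc)
  qed
  have main: "(\<forall>n. (\<forall>i\<le>n. legal x U i) \<longrightarrow> openin (\<tau> A) (Vs x U n) \<and> x n \<in> Vs x U n \<and> Vs x U n \<subseteq> U n) \<and>
          ((\<forall>n. legal x U n) \<longrightarrow> \<Inter>(range (Vs x U)) \<noteq> {})" for x U
    using Vs_good in_all_Vs by blast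
  show ?thesis
    unfolding strong_choquet_def Let_def
    apply (rule conjI[OF ne])
    apply (rule exI[where x=\<sigma>])
    apply (simp only: eqV)
    using main unfolding legal_def by blast
qed

end

theorem theorem4p1:
  fixes \<tau> :: "nat set \<Rightarrow> tree topology"
    and B :: "nat set \<Rightarrow> tree set set"
  assumes top: "\<And>A. finite A \<Longrightarrow> 2 \<le> card A \<Longrightarrow> topspace (\<tau> A) = trees A"
    and basis: "\<And>A. finite A \<Longrightarrow> 2 \<le> card A \<Longrightarrow> is_basis_of (B A) (\<tau> A)"
    and P1: "\<And>A D s. finite A \<Longrightarrow> 2 \<le> card A \<Longrightarrow> finite_tree A D s \<Longrightarrow>
               basic_nbhd A D s \<in> B A"
    and P2: "\<And>A L M. finite A \<Longrightarrow> 2 \<le> card A \<Longrightarrow> L \<in> B A \<Longrightarrow> M \<in> B A \<Longrightarrow>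
               L \<union> M \<in> B A \<and> L \<inter> M \<in> B A"
    and P3: "\<And>A G L. finite A \<Longrightarrow> 2 \<le> card A \<Longrightarrow> finite G \<Longrightarrow> 2 \<le> card G \<Longrightarrow>
               L \<in> B (prod_alph A G) \<Longrightarrow> pi0 ` L \<in> B A"
    and P4: "\<And>A L. finite A \<Longrightarrow> 2 \<le> card A \<Longrightarrow> L \<in> B A \<Longrightarrow>
               \<exists>C \<in> B (prod_alph A two). C \<subseteq> times_T_inf A \<and>
                 (\<exists>F. cantor_closed (prod_alph A two) F \<and> C = F \<inter> times_T_inf A) \<and>
                 L = pi0 ` C"
  shows "\<forall>A. finite A \<and> 2 \<le> card A \<longrightarrow> strong_choquet (\<tau> A)"
proof (intro allI impI)
  fix A :: "nat set" assume "finite A \<and> 2 \<le> card A"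
  then interpret SC \<tau> B A using assms by unfold_locales auto
  show "strong_choquet (\<tau> A)" by (rule sc)
qed

end
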